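(* Let $V\in(\mathbb{R}\cup\{-\infty\})^{n\times p}$ have no row and no column identically equal to $-\infty$, and $E=\{(i,k):V_{ik}\neq-\infty\}$. The operator $$T_i(x)=\inf_{k\in[p],\,(i,k)\in E}\Big[-V_{ik}+\max_{j\in[n],\,j\neq i}(V_{jk}+x_j)\Big],\qquad i\in[n],$$ can be evaluated at any point $x$ in $O(|E|)$ arithmetic operations.
   Context: $-\infty+c=-\infty$, $\max\emptyset=-\infty$. *)

theory Defs
  imports Complex_Main "HOL-Library.Extended_Real"
begin

(* Matrix V in (R \<union> {-\<infinity>})^{n x p}: entries V i k for i<n, k<p, never +\<infinity>.
   Indices are 0-based: [n] = {0..<n}, [p] = {0..<p}. *)

definition supp_E :: "nat \<Rightarrow> nat \<Rightarrow> (nat \<Rightarrow> nat \<Rightarrow> ereal) \<Rightarrow> (nat \<times> nat) set" where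
  "supp_E n p V = {(i,k). i < n \<and> k < p \<and> V i k \<noteq> -\<infinity>}"

(* max over the empty set is -\<infinity> (Sup {} = -\<infinity> in ereal) *)
definition opT :: "nat \<Rightarrow> nat \<Rightarrow> (nat \<Rightarrow> nat \<Rightarrow> ereal) \<Rightarrow> (nat \<Rightarrow> real) \<Rightarrow> nat \<Rightarrow> ereal" where
  "opT n p V x i =
     (INF k \<in> {k. k < p \<and> (i,k) \<in> supp_E n p V}.
        - V i k + (SUP j \<in> {j. j < n \<and> j \<noteq> i}. V j k + ereal (x j)))"

(* Arithmetic straight-line programs (arithmetic circuits) over R \<union> {\<plusminus>\<infinity>}.
   Each instruction produces one new register; arguments refer to earlier registers.
   Every instruction counts as one arithmetic operation. *)
datatype instr =
    IConst ereal
  | IInput nat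
  | IAdd nat nat
  | INeg nat
  | IMax nat nat
  | IMin nat nat

fun instr_wf :: "nat \<Rightarrow> instr \<Rightarrow> bool" where
  "instr_wf r (IConst c) = True"
| "instr_wf r (IInput j) = True"
| "instr_wf r (IAdd a b) = (a < r \<and> b < r)"
| "instr_wf r (INeg a) = (a < r)"
| "instr_wf r (IMax a b) = (a < r \<and> b < r)"
| "instr_wf r (IMin a b) = (a < r \<and> b < r)"

definition prog_wf :: "instr list \<Rightarrow> bool" where
  "prog_wf P = (\<forall>r < length P. instr_wf r (P ! r))"

fun instr_val :: "(nat \<Rightarrow> real) \<Rightarrow> ereal list \<Rightarrow> instr \<Rightarrow> ereal" where
  "instr_val x rs (IConst c) = c"
| "instr_val x rs (IInput j) = ereal (x j)"
| "instr_val x rs (IAdd a b) = rs ! a + rs ! b"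
| "instr_val x rs (INeg a) = - (rs ! a)"
| "instr_val x rs (IMax a b) = max (rs ! a) (rs ! b)"
| "instr_val x rs (IMin a b) = min (rs ! a) (rs ! b)"

definition prog_eval :: "instr list \<Rightarrow> (nat \<Rightarrow> real) \<Rightarrow> ereal list" where
  "prog_eval P x = foldl (\<lambda>rs ins. rs @ [instr_val x rs ins]) [] P"

end

theory Submission
  imports Defs
begin

definition computes :: "instr list \<Rightarrow> nat \<Rightarrow> ((nat \<Rightarrow> real) \<Rightarrow> ereal) \<Rightarrow> bool" where
  "computes P r f \<longleftrightarrow> r < length P \<and> (\<forall>x. prog_eval P x ! r = f x)"

definition ext :: "instr list \<Rightarrow> instr list \<Rightarrow> bool" where
  "ext P P' \<longleftrightarrow> prog_wf P' \<and> (\<exists>Q. P' = P @ Q)"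

lemma foldl_len:
  "length (foldl (\<lambda>rs ins. rs @ [instr_val x rs ins]) rs Q) = length rs + length Q"
  by (induction Q arbitrary: rs) auto

lemma foldl_prefix:
  "take (length rs) (foldl (\<lambda>rs ins. rs @ [instr_val x rs ins]) rs Q) = rs"
proof (induction Q arbitrary: rs)
  case Nil then show ?case by simp
next
  case (Cons a Q)
  have "take (length rs) (foldl (\<lambda>rs ins. rs @ [instr_val x rs ins]) (rs @ [instr_val x rs a]) Q)
      = take (length rs) (take (length (rs @ [instr_val x rs a])) (foldl (\<lambda>rs ins. rs @ [instr_val x rs ins]) (rs @ [instr_val x rs a]) Q))"
    by simp
  also have "\<dots> = rs" using Cons.IH[of "rs @ [instr_val x rs a]"] by simp
  finally show ?case by simp
qed

lemma eval_append:
  "prog_eval (P @ Q) x = foldl (\<lambda>rs ins. rs @ [instr_val x rs ins]) (prog_eval P x) Q"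
  by (simp add: prog_eval_def)

lemma eval_len[simp]: "length (prog_eval P x) = length P"
  unfolding prog_eval_def using foldl_len[of x "[]" P] by simp

lemma eval_nth_append:
  assumes "r < length P" shows "prog_eval (P @ Q) x ! r = prog_eval P x ! r"
proof -
  have "take (length P) (prog_eval (P @ Q) x) = prog_eval P x"
    using foldl_prefix[of "prog_eval P x" x Q] by (simp add: eval_append)
  then show ?thesis using assms by (metis nth_take)
qed

lemma eval_snoc: "prog_eval (P @ [i]) x = prog_eval P x @ [instr_val x (prog_eval P x) i]"
  by (simp add: eval_append)

lemma wf_snoc: "prog_wf (P @ [i]) \<longleftrightarrow> prog_wf P \<and> instr_wf (length P) i"
  unfolding prog_wf_def
  by (auto simp: nth_append less_Suc_eq)

lemma computes_mono: "computes P r f \<Longrightarrow> computes (P @ Q) r f"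
  unfolding computes_def by (simp add: eval_nth_append)

lemma computes_ext: "computes P r f \<Longrightarrow> ext P P' \<Longrightarrow> computes P' r f"
  unfolding ext_def using computes_mono by blast

lemma ext_trans: "ext P P1 \<Longrightarrow> ext P1 P2 \<Longrightarrow> ext P P2"
  unfolding ext_def by auto

lemma ext_refl: "prog_wf P \<Longrightarrow> ext P P"
  unfolding ext_def by (metis append_Nil2)

lemma emit:
  assumes "prog_wf P" "instr_wf (length P) ins"
  shows "ext P (P @ [ins]) \<and> computes (P @ [ins]) (length P) (\<lambda>x. instr_val x (prog_eval P x) ins)"
  using assms unfolding ext_def computes_def by (auto simp: wf_snoc eval_snoc nth_append)

lemma emit_const:
  "prog_wf P \<Longrightarrow> ext P (P @ [IConst c]) \<and> computes (P @ [IConst c]) (length P) (\<lambda>_. c)"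
  using emit[of P "IConst c"] by simp

lemma emit_input:
  "prog_wf P \<Longrightarrow> ext P (P @ [IInput j]) \<and> computes (P @ [IInput j]) (length P) (\<lambda>x. ereal (x j))"
  using emit[of P "IInput j"] by simp

lemma emit_add:
  "prog_wf P \<Longrightarrow> computes P a f \<Longrightarrow> computes P b g \<Longrightarrow>
   ext P (P @ [IAdd a b]) \<and> computes (P @ [IAdd a b]) (length P) (\<lambda>x. f x + g x)"
  using emit[of P "IAdd a b"] by (simp add: computes_def)

lemma emit_max:
  "prog_wf P \<Longrightarrow> computes P a f \<Longrightarrow> computes P b g \<Longrightarrow>
   ext P (P @ [IMax a b]) \<and> computes (P @ [IMax a b]) (length P) (\<lambda>x. max (f x) (g x))"
  using emit[of P "IMax a b"] by (simp add: computes_def)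

lemma emit_min:
  "prog_wf P \<Longrightarrow> computes P a f \<Longrightarrow> computes P b g \<Longrightarrow>
   ext P (P @ [IMin a b]) \<and> computes (P @ [IMin a b]) (length P) (\<lambda>x. min (f x) (g x))"
  using emit[of P "IMin a b"] by (simp add: computes_def)

lemma ext_wf: "ext P P' \<Longrightarrow> prog_wf P'" unfolding ext_def by simp

lemma column:
  fixes v :: "nat \<Rightarrow> ereal"
  assumes "distinct js" "prog_wf P" "computes P z (\<lambda>_. -\<infinity>)" "computes P l A"
  shows "\<exists>P'. ext P P' \<and> length P' \<le> length P + 8 * length js \<and>
     (\<exists>s. computes P' s (\<lambda>x. SUP j\<in>set js. v j + ereal (x j))) \<and>
     (\<forall>j\<in>set js. \<exists>r. computes P' r (\<lambda>x. - v j + max (A x) (SUP j'\<in>set js - {j}. v j' + ereal (x j'))))"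
  using assms
proof (induction js arbitrary: P l A)
  case Nil
  then show ?case using ext_refl[of P] by (auto simp: bot_ereal_def)
next
  case (Cons j rest)
  define w where "w = (\<lambda>x. v j + ereal (x j))"
  define P1 where "P1 = P @ [IInput j]"
  have h1: "ext P P1" "computes P1 (length P) (\<lambda>x. ereal (x j))"
    using emit_input[OF Cons.prems(2)] P1_def by auto
  define P2 where "P2 = P1 @ [IConst (v j)]"
  have h2: "ext P1 P2" "computes P2 (length P1) (\<lambda>_. v j)"
    using emit_const[OF ext_wf[OF h1(1)]] P2_def by auto
  define P3 where "P3 = P2 @ [IAdd (length P1) (length P)]"
  have h3: "ext P2 P3" "computes P3 (length P2) w"
    using emit_add[OF ext_wf[OF h2(1)] h2(2) computes_ext[OF h1(2) h2(1)]] P3_def w_def by auto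
  have e03: "ext P P3" using h1 h2 h3 ext_trans by blast
  define P4 where "P4 = P3 @ [IMax l (length P2)]"
  have h4: "ext P3 P4" "computes P4 (length P3) (\<lambda>x. max (A x) (w x))"
    using emit_max[OF ext_wf[OF h3(1)] computes_ext[OF Cons.prems(4) e03] h3(2)] P4_def by auto
  have e04: "ext P P4" using e03 h4 ext_trans by blast
  obtain P5 s' where h5: "ext P4 P5" "length P5 \<le> length P4 + 8 * length rest"
    "computes P5 s' (\<lambda>x. SUP j\<in>set rest. v j + ereal (x j))"
    "\<forall>j'\<in>set rest. \<exists>r. computes P5 r (\<lambda>x. - v j' + max (max (A x) (w x)) (SUP j''\<in>set rest - {j'}. v j'' + ereal (x j'')))"
    using Cons.IH[of P4 "length P3" "\<lambda>x. max (A x) (w x)"] Cons.prems ext_wf[OF e04]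
      computes_ext[OF Cons.prems(3) e04] h4(2) by auto
  have e05: "ext P P5" using e04 h5 ext_trans by blast
  define P6 where "P6 = P5 @ [IMax l s']"
  have h6: "ext P5 P6" "computes P6 (length P5) (\<lambda>x. max (A x) (SUP j\<in>set rest. v j + ereal (x j)))"
    using emit_max[OF ext_wf[OF h5(1)] computes_ext[OF Cons.prems(4) e05] h5(3)] P6_def by auto
  define P7 where "P7 = P6 @ [IConst (- v j)]"
  have h7: "ext P6 P7" "computes P7 (length P6) (\<lambda>_. - v j)"
    using emit_const[OF ext_wf[OF h6(1)]] P7_def by auto
  define P8 where "P8 = P7 @ [IAdd (length P6) (length P5)]"
  have h8: "ext P7 P8" "computes P8 (length P7) (\<lambda>x. - v j + max (A x) (SUP j\<in>set rest. v j + ereal (x j)))"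
    using emit_add[OF ext_wf[OF h7(1)] h7(2) computes_ext[OF h6(2) h7(1)]] P8_def by auto
  have e58: "ext P5 P8" using h6 h7 h8 ext_trans by blast
  define P9 where "P9 = P8 @ [IMax (length P2) s']"
  have h9: "ext P8 P9" "computes P9 (length P8) (\<lambda>x. max (w x) (SUP j\<in>set rest. v j + ereal (x j)))"
    using emit_max[OF ext_wf[OF h8(1)] computes_ext[OF h3(2) ext_trans[OF ext_trans[OF h4(1) h5(1)] e58]]
       computes_ext[OF h5(3) e58]] P9_def by auto
  have e59: "ext P5 P9" using e58 h9 ext_trans by blast
  have e09: "ext P P9" using e05 e59 ext_trans by blast
  have len: "length P9 \<le> length P + 8 * length (j # rest)"
    using h5(2) by (simp add: P9_def P8_def P7_def P6_def P4_def P3_def P2_def P1_def)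
  have dj: "j \<notin> set rest" "distinct rest" using Cons.prems(1) by auto
  have s9: "computes P9 (length P8) (\<lambda>x. SUP j\<in>set (j # rest). v j + ereal (x j))"
    using h9(2) by (simp add: w_def sup_max)
  have j9: "computes P9 (length P7) (\<lambda>x. - v j + max (A x) (SUP j'\<in>set (j#rest) - {j}. v j' + ereal (x j')))"
  proof -
    have "set (j#rest) - {j} = set rest" using dj by auto
    then show ?thesis using computes_ext[OF h8(2) h9(1)] by simp
  qed
  have r9: "\<exists>r. computes P9 r (\<lambda>x. - v j' + max (A x) (SUP j''\<in>set (j#rest) - {j'}. v j'' + ereal (x j'')))"
    if "j' \<in> set rest" for j'
  proof -
    from bspec[OF h5(4) that] obtain r where r: "computes P5 r (\<lambda>x. - v j' + max (max (A x) (w x)) (SUP j''\<in>set rest - {j'}. v j'' + ereal (x j'')))" ..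
    have se: "set (j#rest) - {j'} = insert j (set rest - {j'})" using dj that by auto
    have sx: "(SUP j''\<in>set (j#rest) - {j'}. v j'' + ereal (x j'')) = max (w x) (SUP j''\<in>set rest - {j'}. v j'' + ereal (x j''))" for x
      unfolding se SUP_insert w_def sup_max ..
    have "(\<lambda>x. - v j' + max (max (A x) (w x)) (SUP j''\<in>set rest - {j'}. v j'' + ereal (x j'')))
       = (\<lambda>x. - v j' + max (A x) (SUP j''\<in>set (j#rest) - {j'}. v j'' + ereal (x j'')))"
      unfolding sx max.assoc ..
    then have "computes P9 r (\<lambda>x. - v j' + max (A x) (SUP j''\<in>set (j#rest) - {j'}. v j'' + ereal (x j'')))"
      using computes_ext[OF r e59] by simp
    then show ?thesis ..
  qed
  show ?case using e09 len s9 j9 r9 by auto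
qed


lemma columns:
  fixes V :: "nat \<Rightarrow> nat \<Rightarrow> ereal" and cols :: "nat \<Rightarrow> nat list"
  assumes "\<forall>k. distinct (cols k)" "prog_wf P" "computes P z (\<lambda>_. -\<infinity>)"
  shows "\<exists>P'. ext P P' \<and> length P' \<le> length P + 8 * (\<Sum>k\<leftarrow>ks. length (cols k)) \<and>
     (\<forall>k\<in>set ks. \<forall>j\<in>set (cols k). \<exists>r. computes P' r
        (\<lambda>x. - V j k + max (-\<infinity>) (SUP j'\<in>set (cols k) - {j}. V j' k + ereal (x j'))))"
  using assms(2,3)
proof (induction ks arbitrary: P)
  case Nil
  then show ?case using ext_refl[of P] by auto
next
  case (Cons k ks)
  obtain P1 where h1: "ext P P1" "length P1 \<le> length P + 8 * length (cols k)"
     "\<forall>j\<in>set (cols k). \<exists>r. computes P1 r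
        (\<lambda>x. - V j k + max (-\<infinity>) (SUP j'\<in>set (cols k) - {j}. V j' k + ereal (x j')))"
    using column[of "cols k" P z z "\<lambda>_. -\<infinity>" "\<lambda>j. V j k"] assms(1) Cons.prems by blast
  obtain P2 where h2: "ext P1 P2" "length P2 \<le> length P1 + 8 * (\<Sum>k\<leftarrow>ks. length (cols k))"
     "\<forall>k\<in>set ks. \<forall>j\<in>set (cols k). \<exists>r. computes P2 r
        (\<lambda>x. - V j k + max (-\<infinity>) (SUP j'\<in>set (cols k) - {j}. V j' k + ereal (x j')))"
    using Cons.IH[of P1] ext_wf[OF h1(1)] computes_ext[OF Cons.prems(2) h1(1)] by blast
  have "\<forall>j\<in>set (cols k). \<exists>r. computes P2 r
        (\<lambda>x. - V j k + max (-\<infinity>) (SUP j'\<in>set (cols k) - {j}. V j' k + ereal (x j')))"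
    using h1(3) computes_ext[OF _ h2(1)] by blast
  then show ?case using h1 h2 ext_trans[OF h1(1) h2(1)] by auto
qed

lemma rowmin:
  assumes "prog_wf P" "\<forall>k\<in>set ks. \<exists>r. computes P r (g k)"
  shows "\<exists>P'. ext P P' \<and> length P' \<le> length P + length ks + 1 \<and>
     (\<exists>r. computes P' r (\<lambda>x. INF k\<in>set ks. g k x))"
  using assms
proof (induction ks)
  case Nil
  then show ?case using emit_const[OF Nil.prems(1), of "\<infinity>"] by (auto simp: top_ereal_def)
next
  case (Cons k ks)
  obtain P1 r1 where h1: "ext P P1" "length P1 \<le> length P + length ks + 1"
    "computes P1 r1 (\<lambda>x. INF k\<in>set ks. g k x)" using Cons by auto
  obtain rk where rk: "computes P rk (g k)" using Cons.prems by auto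
  have h2: "ext P1 (P1 @ [IMin rk r1])" "computes (P1 @ [IMin rk r1]) (length P1) (\<lambda>x. min (g k x) (INF k\<in>set ks. g k x))"
    using emit_min[OF ext_wf[OF h1(1)] computes_ext[OF rk h1(1)] h1(3)] by auto
  have "(\<lambda>x. min (g k x) (INF k\<in>set ks. g k x)) = (\<lambda>x. INF k\<in>set (k#ks). g k x)"
    by (simp add: inf_min)
  then show ?case using h1 h2 ext_trans[OF h1(1) h2(1)] by (intro exI[of _ "P1 @ [IMin rk r1]"]) auto
qed

lemma rows:
  assumes "prog_wf P" "\<forall>i\<in>set rs. \<forall>k\<in>set (ks i). \<exists>r. computes P r (g i k)"
  shows "\<exists>P'. ext P P' \<and> length P' \<le> length P + (\<Sum>i\<leftarrow>rs. length (ks i) + 1) \<and>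
     (\<forall>i\<in>set rs. \<exists>r. computes P' r (\<lambda>x. INF k\<in>set (ks i). g i k x))"
  using assms
proof (induction rs arbitrary: P)
  case Nil
  then show ?case using ext_refl[of P] by auto
next
  case (Cons i rs)
  obtain P1 r1 where h1: "ext P P1" "length P1 \<le> length P + length (ks i) + 1"
    "computes P1 r1 (\<lambda>x. INF k\<in>set (ks i). g i k x)" using rowmin[of P "ks i" "g i"] Cons.prems by auto
  have "\<forall>i\<in>set rs. \<forall>k\<in>set (ks i). \<exists>r. computes P1 r (g i k)"
    using Cons.prems(2) computes_ext[OF _ h1(1)] by (meson list.set_intros(2))
  then obtain P2 where h2: "ext P1 P2" "length P2 \<le> length P1 + (\<Sum>i\<leftarrow>rs. length (ks i) + 1)"
     "\<forall>i\<in>set rs. \<exists>r. computes P2 r (\<lambda>x. INF k\<in>set (ks i). g i k x)"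
    using Cons.IH[of P1] ext_wf[OF h1(1)] by blast
  have "computes P2 r1 (\<lambda>x. INF k\<in>set (ks i). g i k x)" using computes_ext[OF h1(3) h2(1)] .
  then show ?case using h1 h2 ext_trans[OF h1(1) h2(1)] by auto
qed


lemma len_filter_upt: "length (filter P [0..<n]) = card {j. j < n \<and> P j}"
proof -
  have "length (filter P [0..<n]) = card (set (filter P [0..<n]))"
    by (metis distinct_card distinct_filter distinct_upt)
  also have "set (filter P [0..<n]) = {j. j < n \<and> P j}" by auto
  finally show ?thesis .
qed

lemma sum_list_upt0: "(\<Sum>k\<leftarrow>[0..<p]. f k) = (\<Sum>k<p. (f k :: nat))"
  by (metis atLeast0LessThan set_upt sum_set_upt_conv_sum_list_nat)

lemma card_rows: "(\<Sum>i\<leftarrow>[0..<n]. length (filter (\<lambda>k. V i k \<noteq> -\<infinity>) [0..<p])) = card (supp_E n p V)"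
proof -
  have "supp_E n p V = (SIGMA i:{..<n}. {k. k < p \<and> V i k \<noteq> -\<infinity>})"
    unfolding supp_E_def by auto
  then have "card (supp_E n p V) = (\<Sum>i<n. card {k. k < p \<and> V i k \<noteq> -\<infinity>})"
    by (simp add: card_SigmaI)
  then show ?thesis by (simp add: sum_list_upt0 len_filter_upt)
qed

lemma card_cols: "(\<Sum>k\<leftarrow>[0..<p]. length (filter (\<lambda>j. V j k \<noteq> -\<infinity>) [0..<n])) = card (supp_E n p V)"
proof -
  have "supp_E n p V = (\<lambda>(k,j). (j,k)) ` (SIGMA k:{..<p}. {j. j < n \<and> V j k \<noteq> -\<infinity>})"
    unfolding supp_E_def by auto
  moreover have "inj_on (\<lambda>(k,j). (j,k)) (SIGMA k:{..<p}. {j. j < n \<and> V j k \<noteq> -\<infinity>})"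
    by (auto simp: inj_on_def)
  ultimately have "card (supp_E n p V) = (\<Sum>k<p. card {j. j < n \<and> V j k \<noteq> -\<infinity>})"
    by (simp add: card_image card_SigmaI)
  then show ?thesis by (simp add: sum_list_upt0 len_filter_upt)
qed

lemma SUP_drop_bot:
  fixes f :: "nat \<Rightarrow> ereal"
  assumes "B \<subseteq> A" "\<forall>j\<in>A - B. f j = -\<infinity>"
  shows "(SUP j\<in>A. f j) = (SUP j\<in>B. f j)"
proof -
  have "A = B \<union> (A - B)" using assms by auto
  then have "(SUP j\<in>A. f j) = sup (SUP j\<in>B. f j) (SUP j\<in>A - B. f j)"
    by (metis SUP_union)
  moreover have "(SUP j\<in>A - B. f j) = -\<infinity>" using assms(2) by (simp add: bot_ereal_def[symmetric])
  ultimately show ?thesis by (simp add: bot_ereal_def[symmetric])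
qed

theorem proposition6p1:
  "\<exists>C::nat. \<forall>(n::nat) (p::nat) (V::nat \<Rightarrow> nat \<Rightarrow> ereal).
     (\<forall>i<n. \<forall>k<p. V i k \<noteq> \<infinity>) \<and>
     (\<forall>i<n. \<exists>k<p. V i k \<noteq> -\<infinity>) \<and>
     (\<forall>k<p. \<exists>i<n. V i k \<noteq> -\<infinity>) \<longrightarrow>
     (\<exists>(P::instr list) (out::nat \<Rightarrow> nat).
        prog_wf P \<and> length P \<le> C * card (supp_E n p V) \<and>
        (\<forall>i<n. out i < length P) \<and>
        (\<forall>x::nat \<Rightarrow> real. \<forall>i<n. prog_eval P x ! out i = opT n p V x i))"
proof (intro exI[of _ 11] allI impI)
  fix n p :: nat and V :: "nat \<Rightarrow> nat \<Rightarrow> ereal"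
  assume H: "(\<forall>i<n. \<forall>k<p. V i k \<noteq> \<infinity>) \<and>
     (\<forall>i<n. \<exists>k<p. V i k \<noteq> -\<infinity>) \<and>
     (\<forall>k<p. \<exists>i<n. V i k \<noteq> -\<infinity>)"
  show "\<exists>(P::instr list) (out::nat \<Rightarrow> nat).
        prog_wf P \<and> length P \<le> 11 * card (supp_E n p V) \<and>
        (\<forall>i<n. out i < length P) \<and>
        (\<forall>x::nat \<Rightarrow> real. \<forall>i<n. prog_eval P x ! out i = opT n p V x i)"
  proof (cases "n = 0")
    case True
    then show ?thesis by (intro exI[of _ "[]"]) (auto simp: prog_wf_def)
  next
    case False
    define E where "E = supp_E n p V"
    have finE: "finite E" unfolding E_def supp_E_def
      by (rule finite_subset[of _ "{..<n} \<times> {..<p}"]) auto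
    obtain k0 where "k0 < p" "V 0 k0 \<noteq> -\<infinity>" using H False by auto
    then have "(0, k0) \<in> E" using False unfolding E_def supp_E_def by auto
    then have E1: "card E \<ge> 1" using finE card_0_eq[OF finE] by fastforce
    define cols where "cols k = filter (\<lambda>j. V j k \<noteq> -\<infinity>) [0..<n]" for k
    define ks where "ks i = filter (\<lambda>k. V i k \<noteq> -\<infinity>) [0..<p]" for i
    define g where "g i k = (\<lambda>x::nat\<Rightarrow>real. - V i k + max (-\<infinity>) (SUP j'\<in>set (cols k) - {i}. V j' k + ereal (x j')))" for i k
    define P0 where "P0 = [IConst (-\<infinity>)]"
    have h0: "prog_wf P0" "computes P0 0 (\<lambda>_. -\<infinity>)"
      using emit_const[of "[]" "-\<infinity>"] by (auto simp: P0_def prog_wf_def)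
    obtain P1 where h1: "ext P0 P1" "length P1 \<le> length P0 + 8 * (\<Sum>k\<leftarrow>[0..<p]. length (cols k))"
      "\<forall>k\<in>set [0..<p]. \<forall>j\<in>set (cols k). \<exists>r. computes P1 r (g j k)"
      using columns[where cols=cols and P=P0 and z=0 and V=V and ks="[0..<p]"] h0 unfolding g_def cols_def by auto
    have "\<forall>i\<in>set [0..<n]. \<forall>k\<in>set (ks i). \<exists>r. computes P1 r (g i k)"
      using h1(3) by (auto simp: ks_def cols_def)
    then obtain P2 where h2: "ext P1 P2" "length P2 \<le> length P1 + (\<Sum>i\<leftarrow>[0..<n]. length (ks i) + 1)"
      "\<forall>i\<in>set [0..<n]. \<exists>r. computes P2 r (\<lambda>x. INF k\<in>set (ks i). g i k x)"
      using rows[of P1 "[0..<n]" ks g] ext_wf[OF h1(1)] by blast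
    obtain out where out: "\<forall>i\<in>set [0..<n]. computes P2 (out i) (\<lambda>x. INF k\<in>set (ks i). g i k x)"
      using bchoice[OF h2(3)] by blast
    have s1: "(\<Sum>k\<leftarrow>[0..<p]. length (cols k)) = card E"
      unfolding cols_def E_def by (rule card_cols)
    have "(\<Sum>i\<leftarrow>[0..<n]. length (ks i) + 1) \<le> (\<Sum>i\<leftarrow>[0..<n]. 2 * length (ks i))"
    proof (rule sum_list_mono)
      fix i assume "i \<in> set [0..<n]"
      then obtain k where "k < p" "V i k \<noteq> -\<infinity>" using H by auto
      then have "ks i \<noteq> []" unfolding ks_def by (auto simp: filter_empty_conv)
      then show "length (ks i) + 1 \<le> 2 * length (ks i)" by (cases "ks i") auto
    qed
    also have "\<dots> = 2 * card E"
      using card_rows[where n=n and V=V and p=p] unfolding ks_def E_def by (simp add: sum_list_const_mult)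
    finally have s2: "(\<Sum>i\<leftarrow>[0..<n]. length (ks i) + 1) \<le> 2 * card E" .
    have len: "length P2 \<le> 11 * card E"
      using h1(2) h2(2) s1 s2 E1 by (simp add: P0_def)
    have val: "prog_eval P2 x ! out i = opT n p V x i" if "i < n" for x i
    proof -
      have "prog_eval P2 x ! out i = (INF k\<in>set (ks i). g i k x)"
        using out that unfolding computes_def by auto
      also have "set (ks i) = {k. k < p \<and> (i, k) \<in> supp_E n p V}"
        using that unfolding ks_def supp_E_def by auto
      also have "(INF k\<in>{k. k < p \<and> (i, k) \<in> supp_E n p V}. g i k x)
          = (INF k\<in>{k. k < p \<and> (i, k) \<in> supp_E n p V}.
              - V i k + (SUP j\<in>{j. j < n \<and> j \<noteq> i}. V j k + ereal (x j)))"
      proof (rule INF_cong[OF refl])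
        fix k assume "k \<in> {k. k < p \<and> (i, k) \<in> supp_E n p V}"
        have "(SUP j\<in>{j. j < n \<and> j \<noteq> i}. V j k + ereal (x j)) = (SUP j'\<in>set (cols k) - {i}. V j' k + ereal (x j'))"
          by (rule SUP_drop_bot) (auto simp: cols_def)
        then show "g i k x = - V i k + (SUP j\<in>{j. j < n \<and> j \<noteq> i}. V j k + ereal (x j))"
          by (simp add: g_def)
      qed
      finally show ?thesis unfolding opT_def .
    qed
    show ?thesis
      using ext_wf[OF ext_trans[OF h1(1) h2(1)]] len out val
      unfolding E_def computes_def
      by (intro exI[of _ P2] exI[of _ out]) auto
  qed
qed

end
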